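(* Let $f:X\to X$ be a continuous map of a compact metric space $(X,d)$ and let $\mu$ be an $f$-invariant ergodic Borel probability measure with positive metric entropy $h_\mu(f)>0$. Then for every $p\in X$ the stable class $W^s(p)=\{x\in X:\lim_{n\to\infty}d(f^n(x),f^n(p))=0\}$ satisfies $\mu(W^s(p))=0$.
   Context: A stable class of $f$ is a set of the form $W^s(p)$ for some $p\in X$. *)

theory Defs
  imports "HOL-Probability.Probability"
begin

definition invariant_measure :: "('a \<Rightarrow> 'a) \<Rightarrow> 'a measure \<Rightarrow> bool" where
  "invariant_measure f M \<longleftrightarrow> f \<in> measurable M M \<and>
     (\<forall>A \<in> sets M. emeasure M (f -` A \<inter> space M) = emeasure M A)"

definition ergodic_measure :: "('a \<Rightarrow> 'a) \<Rightarrow> 'a measure \<Rightarrow> bool" where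
  "ergodic_measure f M \<longleftrightarrow> invariant_measure f M \<and>
     (\<forall>A \<in> sets M. f -` A \<inter> space M = A \<longrightarrow> measure M A = 0 \<or> measure M A = 1)"

definition finite_meas_partition :: "'a measure \<Rightarrow> 'a set set \<Rightarrow> bool" where
  "finite_meas_partition M P \<longleftrightarrow> finite P \<and> P \<subseteq> sets M \<and> \<Union>P = space M \<and>
     (\<forall>A\<in>P. \<forall>B\<in>P. A \<noteq> B \<longrightarrow> A \<inter> B = {})"

text \<open>Shannon entropy of a finite partition, H(P) = - sum mu(A) log mu(A)
  (with 0 log 0 = 0, which holds since ln 0 = 0 in Isabelle).\<close>
definition part_entropy :: "'a measure \<Rightarrow> 'a set set \<Rightarrow> real" where
  "part_entropy M P = - (\<Sum>A\<in>P. measure M A * ln (measure M A))"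

definition iter_join :: "'a measure \<Rightarrow> ('a \<Rightarrow> 'a) \<Rightarrow> 'a set set \<Rightarrow> nat \<Rightarrow> 'a set set" where
  "iter_join M f P n =
     {space M \<inter> (\<Inter>i<n. (f ^^ i) -` (c i)) | c. \<forall>i<n. c i \<in> P}"

definition entropy_part :: "'a measure \<Rightarrow> ('a \<Rightarrow> 'a) \<Rightarrow> 'a set set \<Rightarrow> real" where
  "entropy_part M f P = lim (\<lambda>n. part_entropy M (iter_join M f P n) / real n)"

definition metric_entropy :: "'a measure \<Rightarrow> ('a \<Rightarrow> 'a) \<Rightarrow> ereal" where
  "metric_entropy M f = (SUP P \<in> {P. finite_meas_partition M P}. ereal (entropy_part M f P))"

definition stable_set :: "'a::metric_space set \<Rightarrow> ('a \<Rightarrow> 'a) \<Rightarrow> 'a \<Rightarrow> 'a set" where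
  "stable_set X f p = {x \<in> X. (\<lambda>n. dist ((f ^^ n) x) ((f ^^ n) p)) \<longlonglongrightarrow> 0}"

end

theory Submission
  imports Defs
begin

locale setting =
  fixes X :: "'a::metric_space set" and f :: "'a \<Rightarrow> 'a" and M :: "'a measure"
  assumes cpt: "compact X" and cont: "continuous_on X f" and fX: "f ` X \<subseteq> X"
    and prob: "prob_space M" and sM: "sets M = sets (restrict_space borel X)" and spM: "space M = X"
    and inv: "invariant_measure f M"
begin

lemma borel_in: "B \<in> sets borel \<Longrightarrow> X \<inter> B \<in> sets M"
  using sM by (auto simp: sets_restrict_space)

lemma id_meas: "(\<lambda>x. x) \<in> measurable M borel"
proof -
  have "(\<lambda>x. x) \<in> measurable (restrict_space borel X) borel"
    by (intro measurable_restrict_space1) simp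
  then show ?thesis using measurable_cong_sets[OF sM, of borel borel] by metis
qed

lemma f_meas: "f \<in> measurable M M" using inv by (simp add: invariant_measure_def)

lemma fn_meas: "(f ^^ n) \<in> measurable M M"
proof (induction n)
  case (Suc n) then show ?case using measurable_comp[OF Suc f_meas] by (simp add: o_def)
qed simp

lemma fn_X: "x \<in> X \<Longrightarrow> (f ^^ n) x \<in> X"
  using fX by (induction n) auto

lemma dist_meas: "(\<lambda>x. dist ((f ^^ n) x) c) \<in> borel_measurable M"
proof -
  have "(\<lambda>y. dist y c) \<in> borel_measurable borel"
    by (intro borel_measurable_continuous_onI continuous_intros)
  then show ?thesis using measurable_comp[OF fn_meas measurable_comp[OF id_meas]] by (simp add: o_def)
qed

end


lemma phi_sub:
  fixes a b :: real assumes "a \<ge> 0" "b \<ge> 0"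
  shows "-((a+b) * ln (a+b)) \<le> -(a * ln a) - b * ln b"
proof (cases "a = 0 \<or> b = 0")
  case True then show ?thesis by auto
next
  case False
  then have a: "a > 0" and b: "b > 0" using assms by auto
  have "ln a \<le> ln (a+b)" "ln b \<le> ln (a+b)" using a b by auto
  then have "a * ln a \<le> a * ln (a+b)" "b * ln b \<le> b * ln (a+b)"
    using a b by (auto intro: mult_left_mono)
  then show ?thesis by (simp add: algebra_simps)
qed

lemma phi_le1: fixes S :: real assumes "S \<ge> 0" shows "-(S * ln S) \<le> 1"
proof (cases "S = 0")
  case False
  then have S: "S > 0" using assms by auto
  have "ln (1/S) \<le> 1/S - 1" using S by (intro ln_le_minus_one) auto
  then have "- ln S \<le> 1/S - 1" using S by (simp add: ln_div)
  then have "S * (- ln S) \<le> S * (1/S - 1)" using S by (intro mult_left_mono) auto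
  then show ?thesis using S by (simp add: algebra_simps)
qed simp

lemma phi_term:
  fixes a S N :: real assumes "a \<ge> 0" "S > 0" "N > 0"
  shows "-(a * ln a) \<le> a * ln N - a * ln S + S / N - a"
proof (cases "a = 0")
  case True then show ?thesis using assms by simp
next
  case False
  then have a: "a > 0" using assms by auto
  have "ln (S / (N * a)) \<le> S / (N * a) - 1" using a assms by (intro ln_le_minus_one) auto
  then have "a * ln (S / (N * a)) \<le> a * (S / (N * a) - 1)" using a by (intro mult_left_mono) auto
  moreover have "ln (S / (N * a)) = ln S - ln N - ln a" using a assms by (simp add: ln_div ln_mult)
  moreover have "a * (S / (N * a) - 1) = S / N - a" using a assms by (simp add: field_simps)
  ultimately show ?thesis by (simp add: algebra_simps)
qed

lemma jensen_ent:
  fixes a :: "'i \<Rightarrow> real"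
  assumes I: "finite I" and nn: "\<And>i. i \<in> I \<Longrightarrow> a i \<ge> 0"
  shows "(\<Sum>i\<in>I. -(a i * ln (a i))) \<le> (\<Sum>i\<in>I. a i) * ln (real (card I)) + 1"
proof -
  define S where "S = (\<Sum>i\<in>I. a i)"
  have S0: "S \<ge> 0" unfolding S_def using nn by (simp add: sum_nonneg)
  show ?thesis
  proof (cases "S = 0")
    case True
    then have "\<forall>i\<in>I. a i = 0" using sum_nonneg_eq_0_iff[OF I] nn unfolding S_def by blast
    then show ?thesis by simp
  next
    case False
    then have Sp: "S > 0" using S0 by auto
    then have "I \<noteq> {}" unfolding S_def by auto
    then have Np: "real (card I) > 0" using I by (simp add: card_gt_0_iff)
    have "(\<Sum>i\<in>I. -(a i * ln (a i))) \<le> (\<Sum>i\<in>I. a i * ln (card I) - a i * ln S + S / card I - a i)"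
      by (intro sum_mono phi_term nn Sp Np)
    also have "\<dots> = S * ln (card I) - S * ln S + S - S"
      unfolding S_def using Np by (simp add: sum_subtractf sum_distrib_right[symmetric] sum.distrib)
    also have "\<dots> \<le> S * ln (card I) + 1" using phi_le1[OF S0] by simp
    finally show ?thesis unfolding S_def .
  qed
qed

lemma sum_pow_card:
  fixes x :: real
  assumes "finite S"
  shows "(\<Sum>B\<in>Pow S. x ^ card B) = (1 + x) ^ card S"
  using assms
proof (induction S rule: finite_induct)
  case (insert a S)
  have "Pow (insert a S) = Pow S \<union> insert a ` Pow S" by (rule Pow_insert)
  moreover have "Pow S \<inter> insert a ` Pow S = {}" using insert by auto
  moreover have "inj_on (insert a) (Pow S)" using insert by (auto simp: inj_on_def)
  ultimately have "(\<Sum>B\<in>Pow (insert a S). x ^ card B) = (\<Sum>B\<in>Pow S. x ^ card B) + (\<Sum>B\<in>Pow S. x ^ card (insert a B))"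
    using insert by (simp add: sum.union_disjoint sum.reindex)
  also have "(\<Sum>B\<in>Pow S. x ^ card (insert a B)) = (\<Sum>B\<in>Pow S. x * x ^ card B)"
    using insert by (intro sum.cong refl) (auto simp: finite_subset card_insert_if)
  finally show ?case using insert by (simp add: sum_distrib_left[symmetric] algebra_simps)
qed simp

lemma card_small_subsets:
  fixes \<eta> :: real
  assumes "0 < \<eta>" "\<eta> \<le> 1"
  shows "real (card {B. B \<subseteq> {..<T} \<and> real (card B) \<le> \<eta> * T}) \<le> (1 + \<eta>) ^ T / \<eta> powr (\<eta> * T)"
proof -
  let ?Bs = "{B. B \<subseteq> {..<T} \<and> real (card B) \<le> \<eta> * T}"
  have fin: "finite ?Bs" by (rule finite_subset[of _ "Pow {..<T}"]) auto
  have pos: "\<eta> powr (\<eta> * T) > 0" using assms by simp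
  have "real (card ?Bs) = (\<Sum>B\<in>?Bs. 1)" by simp
  also have "\<dots> \<le> (\<Sum>B\<in>?Bs. \<eta> ^ card B / \<eta> powr (\<eta> * T))"
  proof (intro sum_mono)
    fix B assume "B \<in> ?Bs"
    then have "real (card B) \<le> \<eta> * T" by simp
    then have "\<eta> powr (\<eta> * T) \<le> \<eta> powr (real (card B))"
      using assms by (intro powr_mono') auto
    also have "\<dots> = \<eta> ^ card B" using assms by (simp add: powr_realpow)
    finally show "1 \<le> \<eta> ^ card B / \<eta> powr (\<eta> * T)" using pos by simp
  qed
  also have "\<dots> \<le> (\<Sum>B\<in>Pow {..<T}. \<eta> ^ card B / \<eta> powr (\<eta> * T))"
    using assms pos by (intro sum_mono2) auto
  also have "\<dots> = (1 + \<eta>) ^ T / \<eta> powr (\<eta> * T)"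
    by (simp add: sum_divide_distrib[symmetric] sum_pow_card)
  finally show ?thesis .
qed

lemma sep_compact:
  fixes S T :: "'a::metric_space set"
  assumes "compact S" "compact T" "S \<inter> T = {}"
  shows "\<exists>d>0. \<forall>x\<in>S. \<forall>y\<in>T. d \<le> dist x y"
proof (cases "S = {} \<or> T = {}")
  case True then show ?thesis by (auto intro: exI[of _ 1])
next
  case False
  have "continuous_on S (\<lambda>x. infdist x T)" by (intro continuous_intros)
  then obtain x0 where x0: "x0 \<in> S" "\<forall>x\<in>S. infdist x0 T \<le> infdist x T"
    using continuous_attains_inf[OF assms(1)] False by blast
  have "infdist x0 T > 0"
    using x0 assms False by (intro infdist_pos_not_in_closed) (auto intro: compact_imp_closed)
  moreover have "\<forall>x\<in>S. \<forall>y\<in>T. infdist x0 T \<le> dist x y"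
    using x0 infdist_le order_trans by blast
  ultimately show ?thesis by blast
qed



lemma ln_nat_nonneg: "0 \<le> ln (real n)"
  by (cases "n = 0") auto

lemma (in prob_space) ent_bound:
  assumes R: "finite R" "R \<subseteq> sets M" and dj: "\<And>A B. A \<in> R \<Longrightarrow> B \<in> R \<Longrightarrow> A \<noteq> B \<Longrightarrow> A \<inter> B = {}"
    and G: "G \<in> sets M"
  shows "part_entropy M R \<le> ln (real (card {A\<in>R. A \<inter> G \<noteq> {}})) + measure M (space M - G) * ln (real (card R)) + 2"
proof -
  let ?RG = "{A\<in>R. A \<inter> G \<noteq> {}}"
  have djf: "disjoint_family_on (\<lambda>A. A \<inter> E) S" if "S \<subseteq> R" for E S
    using dj that unfolding disjoint_family_on_def by blast
  have meas: "A \<in> sets M" if "A \<in> R" for A using R that by auto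
  have split: "measure M A = measure M (A \<inter> G) + measure M (A - G)" if "A \<in> R" for A
  proof -
    have "A = (A \<inter> G) \<union> (A - G)" by auto
    then have "measure M A = measure M ((A \<inter> G) \<union> (A - G))" by simp
    also have "\<dots> = measure M (A \<inter> G) + measure M (A - G)"
      using meas[OF that] G by (intro finite_measure_Union) auto
    finally show ?thesis .
  qed
  have "part_entropy M R = (\<Sum>A\<in>R. -(measure M A * ln (measure M A)))"
    unfolding part_entropy_def by (simp add: sum_negf)
  also have "\<dots> \<le> (\<Sum>A\<in>R. -(measure M (A \<inter> G) * ln (measure M (A \<inter> G)))) +
                   (\<Sum>A\<in>R. -(measure M (A - G) * ln (measure M (A - G))))"
    unfolding sum.distrib[symmetric] by (intro sum_mono) (simp add: split phi_sub)
  also have "(\<Sum>A\<in>R. -(measure M (A \<inter> G) * ln (measure M (A \<inter> G)))) =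
      (\<Sum>A\<in>?RG. -(measure M (A \<inter> G) * ln (measure M (A \<inter> G))))"
    using R by (intro sum.mono_neutral_right) auto
  also have "\<dots> \<le> (\<Sum>A\<in>?RG. measure M (A \<inter> G)) * ln (card ?RG) + 1"
    using R by (intro jensen_ent) auto
  also have "(\<Sum>A\<in>?RG. measure M (A \<inter> G)) = measure M (\<Union>A\<in>?RG. A \<inter> G)"
    using R meas G by (intro finite_measure_finite_Union[symmetric] djf) auto
  also have "measure M (\<Union>A\<in>?RG. A \<inter> G) * ln (card ?RG) \<le> 1 * ln (card ?RG)"
    by (intro mult_right_mono ln_nat_nonneg) auto
  also have "(\<Sum>A\<in>R. -(measure M (A - G) * ln (measure M (A - G)))) \<le>
      (\<Sum>A\<in>R. measure M (A - G)) * ln (card R) + 1"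
    using R by (intro jensen_ent) auto
  also have "(\<Sum>A\<in>R. measure M (A - G)) = measure M (\<Union>A\<in>R. A - G)"
  proof (intro finite_measure_finite_Union[symmetric])
    show "disjoint_family_on (\<lambda>A. A - G) R" using dj unfolding disjoint_family_on_def by blast
  qed (use R meas G in auto)
  also have "measure M (\<Union>A\<in>R. A - G) * ln (card R) \<le> measure M (space M - G) * ln (card R)"
    using R G sets.sets_into_space by (intro mult_right_mono finite_measure_mono ln_nat_nonneg) auto
  finally show ?thesis by simp
qed



locale part_setting = setting +
  fixes P :: "'a::metric_space set set"
  assumes fmp: "finite_meas_partition M P"
begin

lemma P_fin: "finite P" and P_sets: "P \<subseteq> sets M" and P_cov: "\<Union>P = X"
  and P_dj: "\<And>A B. A \<in> P \<Longrightarrow> B \<in> P \<Longrightarrow> A \<noteq> B \<Longrightarrow> A \<inter> B = {}"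
  using fmp spM unfolding finite_meas_partition_def by auto

definition name :: "nat \<Rightarrow> 'a \<Rightarrow> 'a set" where
  "name i x = (THE A. A \<in> P \<and> (f ^^ i) x \<in> A)"

lemma name_eq: assumes "A \<in> P" "(f ^^ i) x \<in> A" shows "name i x = A"
  unfolding name_def
proof (rule the_equality)
  show "A \<in> P \<and> (f ^^ i) x \<in> A" using assms by simp
  fix B assume "B \<in> P \<and> (f ^^ i) x \<in> B"
  then show "B = A" using P_dj[of A B] assms by blast
qed

lemma name_in: assumes "x \<in> X" shows "name i x \<in> P" "(f ^^ i) x \<in> name i x"
proof -
  obtain A where "A \<in> P" "(f ^^ i) x \<in> A" using fn_X[OF assms] P_cov by blast
  then show "name i x \<in> P" "(f ^^ i) x \<in> name i x" using name_eq by auto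
qed

definition cellF :: "nat \<Rightarrow> (nat \<Rightarrow> 'a set) \<Rightarrow> 'a set" where
  "cellF T h = X \<inter> (\<Inter>i<T. (f ^^ i) -` h i)"

definition nm :: "nat \<Rightarrow> 'a \<Rightarrow> nat \<Rightarrow> 'a set" where
  "nm T x = restrict (\<lambda>i. name i x) {..<T}"

lemma nm_in: "x \<in> X \<Longrightarrow> nm T x \<in> PiE {..<T} (\<lambda>_. P)"
  unfolding nm_def using name_in by auto

lemma join_eq: "iter_join M f P T = cellF T ` PiE {..<T} (\<lambda>_. P)"
proof -
  have cr: "cellF T c = cellF T (restrict c {..<T})" for c unfolding cellF_def by auto
  show ?thesis
  proof
    show "iter_join M f P T \<subseteq> cellF T ` PiE {..<T} (\<lambda>_. P)"
    proof
      fix A assume "A \<in> iter_join M f P T"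
      then obtain c where c: "\<forall>i<T. c i \<in> P" "A = cellF T c"
        unfolding iter_join_def cellF_def spM by blast
      then have "restrict c {..<T} \<in> PiE {..<T} (\<lambda>_. P)" by auto
      then show "A \<in> cellF T ` PiE {..<T} (\<lambda>_. P)" using c cr by blast
    qed
    show "cellF T ` PiE {..<T} (\<lambda>_. P) \<subseteq> iter_join M f P T"
    proof
      fix A assume "A \<in> cellF T ` PiE {..<T} (\<lambda>_. P)"
      then obtain h where h: "h \<in> PiE {..<T} (\<lambda>_. P)" "A = cellF T h" by blast
      then have "\<forall>i<T. h i \<in> P" by auto
      then show "A \<in> iter_join M f P T" unfolding iter_join_def cellF_def spM h(2) by blast
    qed
  qed
qed

lemma join_fin: "finite (iter_join M f P T)"
  unfolding join_eq using P_fin by (intro finite_imageI finite_PiE) auto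

lemma join_card: "card (iter_join M f P T) \<le> card P ^ T"
  unfolding join_eq using card_image_le[of "PiE {..<T} (\<lambda>_. P)" "cellF T"] P_fin
  by (simp add: card_PiE finite_PiE)

lemma cell_sets: "h \<in> PiE {..<T} (\<lambda>_. P) \<Longrightarrow> cellF T h \<in> sets M"
proof -
  assume h: "h \<in> PiE {..<T} (\<lambda>_. P)"
  have "cellF T h = (\<Inter>i\<in>{..<T}. (f ^^ i) -` h i \<inter> space M) \<inter> space M"
    unfolding cellF_def spM by auto
  also have "\<dots> \<in> sets M"
  proof (cases "T = 0")
    case False
    then show ?thesis using h P_sets
      by (intro sets.Int sets.finite_INT measurable_sets[OF fn_meas]) (auto simp: PiE_def Pi_def)
  qed simp
  finally show ?thesis .
qed

lemma join_sets: "iter_join M f P T \<subseteq> sets M"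
  unfolding join_eq using cell_sets by auto

lemma cell_eq: assumes "h \<in> PiE {..<T} (\<lambda>_. P)" "x \<in> cellF T h" shows "h = nm T x"
proof
  fix i show "h i = nm T x i"
  proof (cases "i < T")
    case True
    then have "(f ^^ i) x \<in> h i" "h i \<in> P" using assms unfolding cellF_def by auto
    then show ?thesis using name_eq True by (simp add: nm_def)
  next
    case False then show ?thesis using assms by (simp add: nm_def PiE_def extensional_def)
  qed
qed

lemma join_disj: assumes "A \<in> iter_join M f P T" "B \<in> iter_join M f P T" "A \<noteq> B" shows "A \<inter> B = {}"
proof (rule ccontr)
  assume "A \<inter> B \<noteq> {}"
  then obtain x where x: "x \<in> A" "x \<in> B" by blast
  obtain h where h: "h \<in> PiE {..<T} (\<lambda>_. P)" "A = cellF T h" using assms(1) unfolding join_eq by blast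
  obtain h' where h': "h' \<in> PiE {..<T} (\<lambda>_. P)" "B = cellF T h'" using assms(2) unfolding join_eq by blast
  have "h = nm T x" using cell_eq h x by simp
  moreover have "h' = nm T x" using cell_eq h' x by simp
  ultimately show False using h h' assms(3) by simp
qed

lemma join_meet: "{A \<in> iter_join M f P T. A \<inter> G \<noteq> {}} \<subseteq> (\<lambda>h. cellF T h) ` (nm T ` G)"
proof
  fix A assume "A \<in> {A \<in> iter_join M f P T. A \<inter> G \<noteq> {}}"
  then obtain x where x: "x \<in> A" "x \<in> G" and A: "A \<in> iter_join M f P T" by blast
  obtain h where h: "h \<in> PiE {..<T} (\<lambda>_. P)" "A = cellF T h" using A unfolding join_eq by blast
  have "h = nm T x" using cell_eq h x by simp
  then show "A \<in> (\<lambda>h. cellF T h) ` (nm T ` G)" using h x by blast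
qed

lemma ent_T:
  assumes G: "G \<in> sets M"
  shows "part_entropy M (iter_join M f P T) \<le> ln (card (nm T ` G)) + measure M (X - G) * (T * ln (card P)) + 2"
proof -
  interpret prob_space M by (rule prob)
  have GX: "G \<subseteq> X" using G sets.sets_into_space spM by auto
  have finnm: "finite (nm T ` G)"
  proof (rule finite_subset)
    show "nm T ` G \<subseteq> PiE {..<T} (\<lambda>_. P)" using GX nm_in by blast
    show "finite (PiE {..<T} (\<lambda>_. P))" using P_fin by (intro finite_PiE) auto
  qed
  have "part_entropy M (iter_join M f P T) \<le> ln (card {A \<in> iter_join M f P T. A \<inter> G \<noteq> {}}) +
      measure M (space M - G) * ln (card (iter_join M f P T)) + 2"
    by (intro ent_bound join_fin join_sets join_disj G)
  also have "ln (card {A \<in> iter_join M f P T. A \<inter> G \<noteq> {}}) \<le> ln (card (nm T ` G))"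
  proof -
    have "card {A \<in> iter_join M f P T. A \<inter> G \<noteq> {}} \<le> card (nm T ` G)"
      using card_mono[OF finite_imageI[OF finnm] join_meet] card_image_le[OF finnm, of "cellF T"] by linarith
    then show ?thesis
      by (cases "card {A \<in> iter_join M f P T. A \<inter> G \<noteq> {}} = 0") (auto simp: ln_nat_nonneg)
  qed
  also have "ln (card (iter_join M f P T)) \<le> T * ln (card P)"
  proof (cases "card (iter_join M f P T) = 0")
    case False
    have "0 < card P ^ T"
      using less_le_trans[of 0 "card (iter_join M f P T)" "card P ^ T"] False join_card by auto
    then have cP: "0 < real (card P) \<or> T = 0" by (metis gr0I of_nat_0_less_iff power_0_left)
    have c1: "real (card (iter_join M f P T)) \<le> real (card P) ^ T" using join_card
      by (metis of_nat_le_iff of_nat_power)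
    have c2: "0 < real (card (iter_join M f P T))" using False by simp
    have "ln (card (iter_join M f P T)) \<le> ln (real (card P) ^ T)"
    proof (cases "T = 0")
      case True then show ?thesis using c1 c2 by simp
    next
      case False
      then have "0 < real (card P)" using cP by simp
      then show ?thesis using c1 c2 by (subst ln_le_cancel_iff) auto
    qed
    also have "\<dots> = T * ln (card P)"
      using cP by (auto simp: ln_realpow)
    finally show ?thesis .
  qed (simp add: ln_nat_nonneg)
  then have "measure M (space M - G) * ln (card (iter_join M f P T)) \<le> measure M (X - G) * (T * ln (card P))"
    unfolding spM by (intro mult_left_mono measure_nonneg)
  finally show ?thesis by simp
qed

end


context setting begin

lemma closed_in: "closed F \<Longrightarrow> F \<subseteq> X \<Longrightarrow> F \<in> sets M"
  using borel_in[of F] by (auto simp: Int_absorb1)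

lemma diff_in: "B \<in> sets borel \<Longrightarrow> X - B \<in> sets M"
  using borel_in[of "UNIV - B"] by (auto simp: Diff_eq)

lemma X_closed: "closed X" using cpt compact_imp_closed by auto

lemma reg_open:
  assumes U: "open U" and e: "e > 0"
  shows "\<exists>F. closed F \<and> F \<subseteq> X \<inter> U \<and> measure M (X \<inter> U - F) < e"
proof (cases "U = UNIV")
  case True then show ?thesis using X_closed e by (intro exI[of _ X]) auto
next
  case False
  interpret prob_space M by (rule prob)
  define Fn where "Fn n = X \<inter> {x. inverse (real (Suc n)) \<le> infdist x (-U)}" for n
  have cl: "closed (Fn n)" for n unfolding Fn_def
    by (intro closed_Int X_closed closed_Collect_le continuous_intros)
  have sub: "Fn n \<subseteq> X \<inter> U" for n
  proof
    fix x assume x: "x \<in> Fn n"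
    have "infdist x (-U) > 0" using x unfolding Fn_def
      by (auto intro: less_le_trans[of 0 "inverse (real (Suc n))"])
    then have "x \<in> U" by (metis ComplI infdist_zero less_irrefl)
    then show "x \<in> X \<inter> U" using x unfolding Fn_def by auto
  qed
  have inc: "incseq Fn"
  proof (rule incseq_SucI)
    fix n have "inverse (real (Suc (Suc n))) \<le> inverse (real (Suc n))"
      by (auto simp: field_simps)
    then show "Fn n \<subseteq> Fn (Suc n)" unfolding Fn_def using order_trans by blast
  qed
  have un: "(\<Union>n. Fn n) = X \<inter> U"
  proof
    show "X \<inter> U \<subseteq> (\<Union>n. Fn n)"
    proof
      fix x assume x: "x \<in> X \<inter> U"
      have "infdist x (-U) > 0" using x False U by (intro infdist_pos_not_in_closed) auto
      then obtain n where "inverse (real (Suc n)) < infdist x (-U)"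
        using reals_Archimedean by blast
      then show "x \<in> (\<Union>n. Fn n)" using x unfolding Fn_def by (auto intro!: exI[of _ n])
    qed
  qed (use sub in auto)
  have meas: "Fn n \<in> sets M" for n using closed_in cl sub by auto
  have XU: "X \<inter> U \<in> sets M" using borel_in U by auto
  have "(\<lambda>n. measure M (Fn n)) \<longlonglongrightarrow> measure M (X \<inter> U)"
    using finite_Lim_measure_incseq[of Fn] meas inc un by auto
  then have "eventually (\<lambda>n. measure M (Fn n) > measure M (X \<inter> U) - e) sequentially"
    using e by (intro order_tendstoD) auto
  then obtain n where n: "measure M (Fn n) > measure M (X \<inter> U) - e" using eventually_happens'[OF sequentially_bot] by blast
  have "measure M (X \<inter> U - Fn n) = measure M (X \<inter> U) - measure M (Fn n)"
    using XU meas sub by (intro finite_measure_Diff) auto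
  then show ?thesis using n cl sub by (intro exI[of _ "Fn n"]) auto
qed

definition good :: "'a set \<Rightarrow> bool" where
  "good B \<longleftrightarrow> (\<forall>e>0. \<exists>F. closed F \<and> F \<subseteq> X \<inter> B \<and> measure M (X \<inter> B - F) < e) \<and>
     (\<forall>e>0. \<exists>F. closed F \<and> F \<subseteq> X - B \<and> measure M (X - B - F) < e)"

lemma reg_all: "B \<in> sigma_sets UNIV {S. open S} \<Longrightarrow> good B"
proof (induction rule: sigma_sets.induct)
  case (Basic U)
  then have U: "open U" by simp
  have "closed (X - U)" using U X_closed by (simp add: Diff_eq closed_Int open_closed)
  then show ?case unfolding good_def using reg_open[OF U] by (auto intro!: exI[of _ "X - U"])
next
  case Empty
  then show ?case unfolding good_def using X_closed by (auto intro!: exI[of _ X])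
next
  case (Compl a)
  have "X \<inter> (UNIV - a) = X - a" "X - (UNIV - a) = X \<inter> a" by auto
  then show ?case using Compl.IH unfolding good_def by metis
next
  case (Union a)
  interpret prob_space M by (rule prob)
  have ab: "a i \<in> sets borel" for i using Union.hyps sets_borel by auto
  have Xa: "X \<inter> a i \<in> sets M" for i using borel_in ab by auto
  have Xma: "X - a i \<in> sets M" for i using diff_in ab by auto
  have XU: "X \<inter> (\<Union>i. a i) \<in> sets M" using borel_in ab by (auto intro: sets.countable_UN)
  have inner: "\<exists>F. closed F \<and> F \<subseteq> X \<inter> (\<Union>i. a i) \<and> measure M (X \<inter> (\<Union>i. a i) - F) < e" if e: "e > 0" for e
  proof -
    define S where "S k = (\<Union>i<k. X \<inter> a i)" for k
    have Sm: "S k \<in> sets M" for k unfolding S_def by (rule sets.finite_UN) (auto intro: Xa)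
    have Sinc: "incseq S" unfolding S_def incseq_def by (auto simp: subset_eq)
    have Sun: "(\<Union>k. S k) = X \<inter> (\<Union>i. a i)" unfolding S_def by auto
    have "(\<lambda>k. measure M (S k)) \<longlonglongrightarrow> measure M (X \<inter> (\<Union>i. a i))"
      using finite_Lim_measure_incseq[of S] Sm Sinc Sun by auto
    then have "eventually (\<lambda>k. measure M (S k) > measure M (X \<inter> (\<Union>i. a i)) - e/2) sequentially"
      using e by (intro order_tendstoD) auto
    then obtain k where k: "measure M (S k) > measure M (X \<inter> (\<Union>i. a i)) - e/2"
      using eventually_happens'[OF sequentially_bot] by blast
    have "\<forall>i. \<exists>F. closed F \<and> F \<subseteq> X \<inter> a i \<and> measure M (X \<inter> a i - F) < e / (2 * (k+1))"
      using Union.IH e unfolding good_def by auto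
    then obtain F where F: "\<And>i. closed (F i)" "\<And>i. F i \<subseteq> X \<inter> a i"
      "\<And>i. measure M (X \<inter> a i - F i) < e / (2 * (k+1))" by metis
    have Fm: "F i \<in> sets M" for i using closed_in F by auto
    define FF where "FF = (\<Union>i<k. F i)"
    have "closed FF" unfolding FF_def using F by auto
    moreover have FFs: "FF \<subseteq> X \<inter> (\<Union>i. a i)" unfolding FF_def using F(2) by blast
    moreover have "measure M (X \<inter> (\<Union>i. a i) - FF) < e"
    proof -
      have "X \<inter> (\<Union>i. a i) - FF \<subseteq> (X \<inter> (\<Union>i. a i) - S k) \<union> (\<Union>i<k. X \<inter> a i - F i)"
        unfolding FF_def S_def by auto
      then have "measure M (X \<inter> (\<Union>i. a i) - FF) \<le> measure M ((X \<inter> (\<Union>i. a i) - S k) \<union> (\<Union>i<k. X \<inter> a i - F i))"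
        using XU Sm Xa Fm by (intro finite_measure_mono) auto
      also have "\<dots> \<le> measure M (X \<inter> (\<Union>i. a i) - S k) + measure M (\<Union>i<k. X \<inter> a i - F i)"
        using XU Sm Xa Fm by (intro measure_subadditive) auto
      also have "measure M (\<Union>i<k. X \<inter> a i - F i) \<le> (\<Sum>i<k. measure M (X \<inter> a i - F i))"
        using Xa Fm by (intro finite_measure_subadditive_finite) auto
      also have "\<dots> \<le> (\<Sum>i<k. e / (2 * (k+1)))"
        using F(3) by (intro sum_mono less_imp_le) auto
      also have "\<dots> = k * e / (2 * (k+1))" by simp
      also have "\<dots> < e / 2" using e by (simp add: field_simps)
      also have "measure M (X \<inter> (\<Union>i. a i) - S k) = measure M (X \<inter> (\<Union>i. a i)) - measure M (S k)"
        using XU Sm by (intro finite_measure_Diff) (auto simp: S_def)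
      finally show ?thesis using k by simp
    qed
    ultimately show ?thesis by blast
  qed
  have outer: "\<exists>F. closed F \<and> F \<subseteq> X - (\<Union>i. a i) \<and> measure M (X - (\<Union>i. a i) - F) < e" if e: "e > 0" for e
  proof -
    have "\<forall>i. \<exists>F. closed F \<and> F \<subseteq> X - a i \<and> measure M (X - a i - F) < e/2 * (1/2)^Suc i"
    proof
      fix i
      have pos: "e/2 * (1/2::real)^Suc i > 0" using e by simp
      show "\<exists>F. closed F \<and> F \<subseteq> X - a i \<and> measure M (X - a i - F) < e/2 * (1/2)^Suc i"
        using Union.IH[of i] pos unfolding good_def by blast
    qed
    then obtain F where F: "\<And>i. closed (F i)" "\<And>i. F i \<subseteq> X - a i"
      "\<And>i. measure M (X - a i - F i) < e/2 * (1/2)^Suc i" by metis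
    have Fm: "F i \<in> sets M" for i using closed_in F by auto
    define FF where "FF = (\<Inter>i. F i)"
    have "closed FF" unfolding FF_def using F by auto
    moreover have "FF \<subseteq> X - (\<Union>i. a i)" unfolding FF_def using F by blast
    moreover have "measure M (X - (\<Union>i. a i) - FF) < e"
    proof -
      have geo: "(\<lambda>i. e/2 * (1/2::real)^Suc i) sums (e/2 * 1)"
        by (intro sums_mult power_half_series)
      have summ: "summable (\<lambda>i. measure M (X - a i - F i))"
        using F(3) geo by (intro summable_comparison_test[OF _ sums_summable[OF geo]]) (auto intro!: exI[of _ 0] less_imp_le)
      have "X - (\<Union>i. a i) - FF \<subseteq> (\<Union>i. X - a i - F i)" unfolding FF_def by auto
      then have "measure M (X - (\<Union>i. a i) - FF) \<le> measure M (\<Union>i. X - a i - F i)"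
        using Xma Fm by (intro finite_measure_mono) auto
      also have "\<dots> \<le> (\<Sum>i. measure M (X - a i - F i))"
        using Xma Fm summ by (intro finite_measure_subadditive_countably) auto
      also have "\<dots> \<le> (\<Sum>i. e/2 * (1/2)^Suc i)"
        using F(3) summ sums_summable[OF geo] by (intro suminf_le less_imp_le) auto
      also have "\<dots> = e/2" using geo sums_unique by fastforce
      finally show ?thesis using e by simp
    qed
    ultimately show ?thesis by blast
  qed
  show ?case unfolding good_def using inner outer by blast
qed

lemma closed_inner:
  assumes A: "A \<in> sets M" and e: "e > 0"
  shows "\<exists>F. closed F \<and> F \<subseteq> A \<and> measure M (A - F) < e"
proof -
  obtain B where B: "B \<in> sets borel" "A = X \<inter> B" using A sM by (auto simp: sets_restrict_space)
  then show ?thesis using reg_all[of B] e sets_borel unfolding good_def by auto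
qed

end


context setting begin

definition conv :: "'a \<Rightarrow> nat \<Rightarrow> nat \<Rightarrow> 'a set" where
  "conv p k m = {x\<in>X. (\<lambda>n. dist ((f ^^ (n + k)) x) ((f ^^ (n + m)) p)) \<longlonglongrightarrow> 0}"

lemma lim0_iff:
  fixes g :: "nat \<Rightarrow> real" assumes "\<And>n. g n \<ge> 0"
  shows "g \<longlonglongrightarrow> 0 \<longleftrightarrow> (\<forall>j::nat. \<exists>N. \<forall>n\<ge>N. g n < inverse (real (Suc j)))"
proof
  assume "g \<longlonglongrightarrow> 0"
  then show "\<forall>j::nat. \<exists>N. \<forall>n\<ge>N. g n < inverse (real (Suc j))"
    unfolding LIMSEQ_iff using assms by (auto simp del: of_nat_Suc)
next
  assume H: "\<forall>j::nat. \<exists>N. \<forall>n\<ge>N. g n < inverse (real (Suc j))"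
  show "g \<longlonglongrightarrow> 0" unfolding LIMSEQ_iff
  proof (intro allI impI)
    fix r :: real assume "r > 0"
    then obtain j where j: "inverse (real (Suc j)) < r" using reals_Archimedean by blast
    obtain N where "\<forall>n\<ge>N. g n < inverse (real (Suc j))" using H by blast
    then show "\<exists>no. \<forall>n\<ge>no. norm (g n - 0) < r" using j assms by (auto intro!: exI[of _ N])
  qed
qed

lemma lt_set: "{x \<in> X. dist ((f ^^ n) x) c < r} \<in> sets M"
proof -
  have "{x \<in> X. dist ((f ^^ n) x) c < r} = (\<lambda>x. dist ((f ^^ n) x) c) -` {..<r} \<inter> space M"
    using spM by auto
  also have "\<dots> \<in> sets M" by (intro measurable_sets[OF dist_meas]) auto
  finally show ?thesis .
qed

lemma INT_nat: "(\<And>j. A j \<in> sets M) \<Longrightarrow> (\<Inter>j::nat. A j) \<in> sets M"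
  by (rule sets.countable_INT') auto
lemma UN_nat: "(\<And>j. A j \<in> sets M) \<Longrightarrow> (\<Union>j::nat. A j) \<in> sets M"
  by (rule sets.countable_UN') auto
lemma INT_from: "(\<And>j. A j \<in> sets M) \<Longrightarrow> (\<Inter>j\<in>{N::nat..}. A j) \<in> sets M"
  by (rule sets.countable_INT') auto

lemma set_aux: "{x\<in>X. \<forall>j::nat. \<exists>N::nat. \<forall>n\<ge>N. Q j n x} = (\<Inter>j. \<Union>N. \<Inter>n\<in>{N..}. {x\<in>X. Q j n x}) \<inter> X"
  by (auto simp: atLeast_def)

lemma conv_meas: "conv p k m \<in> sets M"
proof -
  have "conv p k m = (\<Inter>j. \<Union>N. \<Inter>n\<in>{N..}. {x \<in> X. dist ((f ^^ (n + k)) x) ((f ^^ (n + m)) p) < inverse (real (Suc j))}) \<inter> X"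
    unfolding conv_def by (subst lim0_iff) (auto simp: set_aux[symmetric])
  also have "\<dots> \<in> sets M"
    using spM sets.top by (intro sets.Int INT_nat UN_nat INT_from lt_set) auto
  finally show ?thesis .
qed

definition Aall :: "'a \<Rightarrow> 'a set" where "Aall p = (\<Union>k. \<Union>m. conv p k m)"

lemma Aall_meas: "Aall p \<in> sets M"
  unfolding Aall_def by (intro UN_nat conv_meas)

lemma Aall_sub: "Aall p \<subseteq> X" unfolding Aall_def conv_def by auto

lemma Aall_inv: "f -` Aall p \<inter> X = Aall p"
proof
  show "f -` Aall p \<inter> X \<subseteq> Aall p"
  proof
    fix x assume x: "x \<in> f -` Aall p \<inter> X"
    then obtain k m where km: "f x \<in> conv p k m" unfolding Aall_def by blast
    have "(f ^^ (n + Suc k)) x = (f ^^ (n + k)) (f x)" for n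
      by (simp add: funpow_Suc_right del: funpow.simps)
    then have "x \<in> conv p (Suc k) m" using km x unfolding conv_def by simp
    then show "x \<in> Aall p" unfolding Aall_def by blast
  qed
  show "Aall p \<subseteq> f -` Aall p \<inter> X"
  proof
    fix x assume x: "x \<in> Aall p"
    then obtain k m where km: "x \<in> conv p k m" unfolding Aall_def by blast
    have fx: "f x \<in> X" using km fX unfolding conv_def by auto
    show "x \<in> f -` Aall p \<inter> X"
    proof (cases k)
      case (Suc k')
      have "(f ^^ (n + k')) (f x) = (f ^^ (n + k)) x" for n
        using Suc by (simp add: funpow_Suc_right del: funpow.simps)
      then have "f x \<in> conv p k' m" using km fx unfolding conv_def by simp
      then show ?thesis using km unfolding Aall_def conv_def by blast
    next
      case 0
      have L: "(\<lambda>n. dist ((f ^^ (Suc n + 0)) x) ((f ^^ (Suc n + m)) p)) \<longlonglongrightarrow> 0"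
        using km 0 unfolding conv_def by (intro LIMSEQ_Suc) simp
      have "(f ^^ (n + 0)) (f x) = (f ^^ (Suc n + 0)) x" for n
        by (simp add: funpow_Suc_right del: funpow.simps)
      moreover have "(f ^^ (n + Suc m)) p = (f ^^ (Suc n + m)) p" for n by simp
      ultimately have "f x \<in> conv p 0 (Suc m)" using L fx unfolding conv_def by simp
      then show ?thesis using km unfolding Aall_def conv_def by blast
    qed
  qed
qed

definition Ub :: "'a \<Rightarrow> real \<Rightarrow> nat \<Rightarrow> nat \<Rightarrow> nat \<Rightarrow> 'a set" where
  "Ub p \<delta> N k m = {x\<in>X. \<forall>n\<ge>N. dist ((f ^^ (n + k)) x) ((f ^^ (n + m)) p) < \<delta>}"

definition Bn :: "'a \<Rightarrow> real \<Rightarrow> nat \<Rightarrow> 'a set" where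
  "Bn p \<delta> N = (\<Union>k\<le>N. \<Union>m\<le>N. Ub p \<delta> N k m)"

lemma Ub_meas: "Ub p \<delta> N k m \<in> sets M"
proof -
  have "Ub p \<delta> N k m = (\<Inter>n\<in>{N..}. {x \<in> X. dist ((f ^^ (n + k)) x) ((f ^^ (n + m)) p) < \<delta>}) \<inter> X"
    unfolding Ub_def by auto
  also have "\<dots> \<in> sets M"
    using spM sets.top by (intro sets.Int INT_from lt_set) auto
  finally show ?thesis .
qed

lemma Bn_sub: "Bn p \<delta> N \<subseteq> X" unfolding Bn_def Ub_def by blast

lemma Bn_meas: "Bn p \<delta> N \<in> sets M"
  unfolding Bn_def by (intro sets.finite_UN Ub_meas) auto

lemma Bn_inc: "incseq (Bn p \<delta>)"
proof (rule incseq_SucI)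
  fix N
  have "Ub p \<delta> N k m \<subseteq> Ub p \<delta> (Suc N) k m" for k m unfolding Ub_def by auto
  then show "Bn p \<delta> N \<subseteq> Bn p \<delta> (Suc N)" unfolding Bn_def
    by (intro UN_mono) auto
qed

lemma Bn_cover: assumes "\<delta> > 0" shows "Aall p \<subseteq> (\<Union>N. Bn p \<delta> N)"
proof
  fix x assume "x \<in> Aall p"
  then obtain k m where km: "x \<in> conv p k m" unfolding Aall_def by blast
  then have "(\<lambda>n. dist ((f ^^ (n + k)) x) ((f ^^ (n + m)) p)) \<longlonglongrightarrow> 0" "x \<in> X"
    unfolding conv_def by auto
  then have "eventually (\<lambda>n. dist ((f ^^ (n + k)) x) ((f ^^ (n + m)) p) < \<delta>) sequentially"
    using assms by (intro order_tendstoD(2)) auto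
  then obtain N0 where N0: "\<forall>n\<ge>N0. dist ((f ^^ (n + k)) x) ((f ^^ (n + m)) p) < \<delta>"
    unfolding eventually_sequentially by blast
  define N where "N = max N0 (max k m)"
  have "x \<in> Ub p \<delta> N k m" using N0 \<open>x \<in> X\<close> unfolding Ub_def N_def by auto
  moreover have "k \<in> {..N}" "m \<in> {..N}" unfolding N_def by auto
  ultimately have "x \<in> Bn p \<delta> N" unfolding Bn_def by blast
  then show "x \<in> (\<Union>N. Bn p \<delta> N)" by blast
qed

lemma stable_conv: "stable_set X f p = conv p 0 0"
  unfolding stable_set_def conv_def by simp

lemma good_N:
  assumes erg: "ergodic_measure f M" and pos: "measure M (stable_set X f p) > 0"
    and d: "\<delta> > 0" and e: "e > 0"
  shows "\<exists>N. measure M (X - Bn p \<delta> N) < e"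
proof -
  interpret prob_space M by (rule prob)
  have "stable_set X f p \<subseteq> Aall p" unfolding stable_conv Aall_def by blast
  then have "measure M (Aall p) > 0"
    using pos finite_measure_mono[OF _ Aall_meas] by (meson less_le_trans)
  then have A1: "measure M (Aall p) = 1"
  proof -
    have E: "\<forall>A\<in>sets M. f -` A \<inter> space M = A \<longrightarrow> measure M A = 0 \<or> measure M A = 1"
      using erg unfolding ergodic_measure_def by blast
    then have "measure M (Aall p) = 0 \<or> measure M (Aall p) = 1" using Aall_meas Aall_inv spM by simp
    then show ?thesis using \<open>measure M (Aall p) > 0\<close> by linarith
  qed
  have "(\<lambda>N. measure M (Bn p \<delta> N)) \<longlonglongrightarrow> measure M (\<Union>N. Bn p \<delta> N)"
    using Bn_meas Bn_inc by (intro finite_Lim_measure_incseq) auto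
  moreover have "measure M (\<Union>N. Bn p \<delta> N) \<ge> 1"
    using A1 finite_measure_mono[OF Bn_cover[OF d, of p] UN_nat[OF Bn_meas]] by linarith
  ultimately have "eventually (\<lambda>N. measure M (Bn p \<delta> N) > 1 - e) sequentially"
    using e by (intro order_tendstoD) auto
  then obtain N where N: "measure M (Bn p \<delta> N) > 1 - e" using eventually_happens'[OF sequentially_bot] by blast
  have "measure M (X - Bn p \<delta> N) = measure M X - measure M (Bn p \<delta> N)"
    using Bn_meas spM Bn_sub sets.top by (intro finite_measure_Diff) auto
  also have "measure M X = 1" using prob_space spM by metis
  finally have "measure M (X - Bn p \<delta> N) < e" using N by simp
  then show ?thesis by blast
qed

end


context setting begin

lemma pre_eq: "x \<in> X \<Longrightarrow> (f ^^ Suc n) x = (f ^^ n) (f x)"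
  by (simp add: funpow_Suc_right del: funpow.simps)

lemma inv_iter:
  assumes A: "A \<in> sets M"
  shows "measure M ((f ^^ n) -` A \<inter> X) = measure M A"
proof (induction n)
  case 0
  have "A \<subseteq> X" using A sets.sets_into_space spM by auto
  then show ?case by (simp add: Int_absorb2)
next
  case (Suc n)
  have Am: "(f ^^ n) -` A \<inter> X \<in> sets M" using measurable_sets[OF fn_meas A] spM by simp
  have "(f ^^ Suc n) -` A \<inter> X = f -` ((f ^^ n) -` A \<inter> X) \<inter> X"
    using fX pre_eq by auto
  then have "measure M ((f ^^ Suc n) -` A \<inter> X) = measure M (f -` ((f ^^ n) -` A \<inter> X) \<inter> space M)"
    using spM by simp
  also have "\<dots> = measure M ((f ^^ n) -` A \<inter> X)"
  proof -
    have "emeasure M (f -` ((f ^^ n) -` A \<inter> X) \<inter> space M) = emeasure M ((f ^^ n) -` A \<inter> X)"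
      using inv Am unfolding invariant_measure_def by blast
    then show ?thesis unfolding measure_def by (rule arg_cong)
  qed
  finally show ?case using Suc.IH by (simp only:)
qed

lemma markov_count:
  fixes T :: nat and \<eta> :: real
  assumes D: "D \<in> sets M" and eta: "\<eta> > 0" and T: "T > 0"
  shows "measure M {x\<in>X. \<eta> * T < real (card {i\<in>{..<T}. (f ^^ i) x \<in> D})} \<le> measure M D / \<eta>"
    and "{x\<in>X. \<eta> * T < real (card {i\<in>{..<T}. (f ^^ i) x \<in> D})} \<in> sets M"
proof -
  interpret prob_space M by (rule prob)
  define S where "S i = (f ^^ i) -` D \<inter> X" for i
  have Sm: "S i \<in> sets M" for i unfolding S_def using measurable_sets[OF fn_meas D] spM by simp
  define u where "u x = (\<Sum>i<T. indicator (S i) x :: real)" for x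
  have cnt: "real (card {i\<in>{..<T}. (f ^^ i) x \<in> D}) = u x" if "x \<in> X" for x
  proof -
    have "real (card {i\<in>{..<T}. (f ^^ i) x \<in> D}) = (\<Sum>i\<in>{i\<in>{..<T}. (f ^^ i) x \<in> D}. 1)" by simp
    also have "\<dots> = (\<Sum>i<T. if (f ^^ i) x \<in> D then 1 else 0)" by (subst sum.inter_filter) auto
    also have "\<dots> = u x" unfolding u_def S_def using that by (intro sum.cong) (auto simp: indicator_def)
    finally show ?thesis .
  qed
  have int: "integrable M u" unfolding u_def using Sm by (intro Bochner_Integration.integrable_sum integrable_real_indicator) (auto simp: emeasure_eq_measure)
  have intu: "(\<integral>x. u x \<partial>M) = T * measure M D"
  proof -
    have "(\<integral>x. u x \<partial>M) = (\<Sum>i<T. measure M (S i \<inter> space M))"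
      unfolding u_def using Sm by (subst Bochner_Integration.integral_sum) (auto simp: emeasure_eq_measure)
    also have "\<dots> = (\<Sum>i<T. measure M D)" unfolding S_def using inv_iter[OF D] spM
      by (intro sum.cong) (auto simp: Int_assoc)
    finally show ?thesis by simp
  qed
  have "{x\<in>X. \<eta> * T < real (card {i\<in>{..<T}. (f ^^ i) x \<in> D})} \<subseteq> {x\<in>space M. u x \<ge> \<eta> * T}"
    using cnt spM by auto
  then have "measure M {x\<in>X. \<eta> * T < real (card {i\<in>{..<T}. (f ^^ i) x \<in> D})} \<le> measure M {x\<in>space M. u x \<ge> \<eta> * T}"
    using int by (intro finite_measure_mono) auto
  also have "\<dots> \<le> (\<integral>x. u x \<partial>M) / (\<eta> * T)"
    using int eta T by (intro integral_Markov_inequality_measure[OF int sets.top]) (auto simp: u_def intro!: AE_I2 sum_nonneg)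
  also have "\<dots> = measure M D / \<eta>" using intu T by simp
  finally show "measure M {x\<in>X. \<eta> * T < real (card {i\<in>{..<T}. (f ^^ i) x \<in> D})} \<le> measure M D / \<eta>" .
  have um: "u \<in> borel_measurable M" using int by (rule borel_measurable_integrable)
  have "{x\<in>X. \<eta> * T < real (card {i\<in>{..<T}. (f ^^ i) x \<in> D})} = u -` {\<eta> * T<..} \<inter> space M"
    using cnt spM by auto
  also have "\<dots> \<in> sets M" using um by (rule measurable_sets) auto
  finally show "{x\<in>X. \<eta> * T < real (card {i\<in>{..<T}. (f ^^ i) x \<in> D})} \<in> sets M" .
qed

end

lemma count_names:
  fixes nmf :: "'x \<Rightarrow> nat \<Rightarrow> 'b" and s :: "nat \<Rightarrow> nat \<Rightarrow> nat \<Rightarrow> 'b" and \<eta> :: real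
  assumes P: "finite P" "P \<noteq> {}"
    and H: "\<And>x. x \<in> G \<Longrightarrow> nmf x \<in> PiE {..<T} (\<lambda>_. P) \<and> (\<exists>k\<le>N. \<exists>m\<le>N. \<exists>B. B \<subseteq> {..<T} \<and> real (card B) \<le> \<eta> * T \<and>
              (\<forall>i<T. L \<le> i \<and> i \<notin> B \<longrightarrow> nmf x i = s k m i))"
  shows "card (nmf ` G) \<le> (N+1) * (N+1) * card {B. B \<subseteq> {..<T} \<and> real (card B) \<le> \<eta> * T} * card P ^ (L + nat \<lfloor>\<eta> * T\<rfloor>)"
proof -
  define Bs where "Bs = {B. B \<subseteq> {..<T} \<and> real (card B) \<le> \<eta> * T}"
  define Hs where "Hs = (\<lambda>(k,m,B). {h\<in>PiE {..<T} (\<lambda>_. P). \<forall>i<T. L \<le> i \<and> i \<notin> B \<longrightarrow> h i = s k m i})"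
  define I where "I = {..N} \<times> {..N} \<times> Bs"
  have finBs: "finite Bs" unfolding Bs_def by (rule finite_subset[of _ "Pow {..<T}"]) auto
  have finI: "finite I" unfolding I_def using finBs by auto
  have sub: "nmf ` G \<subseteq> (\<Union>i\<in>I. Hs i)"
  proof
    fix h assume "h \<in> nmf ` G"
    then obtain x where x: "x \<in> G" "h = nmf x" by blast
    obtain k m B where "k \<le> N" "m \<le> N" "B \<subseteq> {..<T}" "real (card B) \<le> \<eta> * T"
      "\<forall>i<T. L \<le> i \<and> i \<notin> B \<longrightarrow> nmf x i = s k m i" using H[OF x(1)] by blast
    moreover have "nmf x \<in> PiE {..<T} (\<lambda>_. P)" using H[OF x(1)] by blast
    ultimately have "h \<in> Hs (k,m,B)" "(k,m,B) \<in> I" unfolding Hs_def I_def Bs_def x(2) by auto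
    then show "h \<in> (\<Union>i\<in>I. Hs i)" by blast
  qed
  have Hcard: "card (Hs (k,m,B)) \<le> card P ^ (L + nat \<lfloor>\<eta> * T\<rfloor>)" if "B \<in> Bs" for k m B
  proof -
    define S where "S = {i\<in>{..<T}. i < L \<or> i \<in> B}"
    have inj: "inj_on (\<lambda>h. restrict h S) (Hs (k,m,B))"
    proof (rule inj_onI)
      fix h h' assume h: "h \<in> Hs (k,m,B)" and h': "h' \<in> Hs (k,m,B)" and eq: "restrict h S = restrict h' S"
      show "h = h'"
      proof
        fix i show "h i = h' i"
        proof (cases "i < T")
          case True
          show ?thesis
          proof (cases "i \<in> S")
            case True then show ?thesis using eq by (metis restrict_apply')
          next
            case False
            then have "L \<le> i" "i \<notin> B" using \<open>i < T\<close> unfolding S_def by auto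
            then show ?thesis using h h' \<open>i < T\<close> unfolding Hs_def by auto
          qed
        next
          case False then show ?thesis using h h' unfolding Hs_def by (auto simp: PiE_def extensional_def)
        qed
      qed
    qed
    have img: "(\<lambda>h. restrict h S) ` Hs (k,m,B) \<subseteq> PiE S (\<lambda>_. P)"
      unfolding Hs_def S_def by (auto simp: PiE_def Pi_def)
    have finS: "finite S" unfolding S_def by auto
    have "card (Hs (k,m,B)) = card ((\<lambda>h. restrict h S) ` Hs (k,m,B))" using card_image[OF inj] by simp
    also have "\<dots> \<le> card (PiE S (\<lambda>_. P))" using img finS P by (intro card_mono finite_PiE) auto
    also have "\<dots> = card P ^ card S" using finS by (simp add: card_PiE)
    also have "\<dots> \<le> card P ^ (L + nat \<lfloor>\<eta> * T\<rfloor>)"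
    proof (intro power_increasing)
      have "S \<subseteq> {..<L} \<union> B" unfolding S_def by auto
      moreover have "finite B" using that unfolding Bs_def by (auto intro: finite_subset)
      ultimately have "card S \<le> card ({..<L} \<union> B)" by (intro card_mono) auto
      also have "\<dots> \<le> L + card B" using card_Un_le[of "{..<L}" B] by simp
      also have "card B \<le> nat \<lfloor>\<eta> * T\<rfloor>" using that unfolding Bs_def by (intro le_nat_floor) auto
      finally show "card S \<le> L + nat \<lfloor>\<eta> * T\<rfloor>" by simp
      show "1 \<le> card P" using P by (simp add: Suc_le_eq card_gt_0_iff)
    qed
    finally show ?thesis .
  qed
  have "card (nmf ` G) \<le> card (\<Union>i\<in>I. Hs i)"
    using sub finI P by (intro card_mono) (auto simp: Hs_def intro!: finite_subset[OF _ finite_PiE[of "{..<T}" "\<lambda>_. P"]])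
  also have "\<dots> \<le> (\<Sum>i\<in>I. card (Hs i))" using finI by (rule card_UN_le)
  also have "\<dots> \<le> card I * card P ^ (L + nat \<lfloor>\<eta> * T\<rfloor>)"
    using Hcard unfolding I_def by (intro sum_bounded_above[where K="card P ^ (L + nat \<lfloor>\<eta> * T\<rfloor>)", simplified]) auto
  also have "card I = (N+1) * (N+1) * card Bs" unfolding I_def by (simp add: card_cartesian_product algebra_simps)
  finally show ?thesis unfolding Bs_def by simp
qed



lemma ln_prod_bound:
  fixes a b d :: real
  assumes "real Z \<le> a * b * d" "1 \<le> a" "1 \<le> b" "1 \<le> d"
  shows "ln (real Z) \<le> ln a + ln b + ln d"
proof (cases "Z = 0")
  case True then show ?thesis using assms by simp
next
  case False
  then have "ln (real Z) \<le> ln (a * b * d)" using assms by (subst ln_le_cancel_iff) auto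
  also have "\<dots> = ln a + ln b + ln d" using assms by (simp add: ln_mult)
  finally show ?thesis .
qed

lemma eta_choice:
  fixes \<epsilon> c :: real assumes "\<epsilon> > 0" "c \<ge> 0"
  shows "\<exists>\<eta>. 0 < \<eta> \<and> \<eta> \<le> 1 \<and> \<eta> * (1 + ln (1/\<eta>) + c) < \<epsilon>"
proof -
  define s where "s = min 1 (\<epsilon> / (2 * (3 + c)))"
  have s12: "0 < s" "s \<le> 1" using assms unfolding s_def by auto
  have "s \<le> \<epsilon> / (2 * (3 + c))" unfolding s_def by simp
  then have "s * (3 + c) \<le> \<epsilon> / (2 * (3 + c)) * (3 + c)" using assms by (intro mult_right_mono) auto
  also have "\<dots> = \<epsilon> / 2" using assms by (simp add: field_simps)
  finally have "s * (3 + c) < \<epsilon>" using assms by simp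
  note s = s12 this
  have "ln (1/s) \<le> 1/s - 1" using s by (intro ln_le_minus_one) auto
  then have l: "ln (1/s) \<le> 1/s" by simp
  have "ln (1/s^2) = 2 * ln (1/s)" using s by (simp add: ln_div ln_realpow)
  then have "s^2 * ln (1/s^2) = 2 * s * (s * ln (1/s))" by (simp add: power2_eq_square)
  also have "\<dots> \<le> 2 * s * (s * (1/s))" using s l by (intro mult_left_mono) auto
  also have "\<dots> = 2 * s" using s by simp
  finally have A: "s^2 * ln (1/s^2) \<le> 2 * s" .
  have B: "s^2 * (1 + c) \<le> s * (1 + c)" using s assms by (intro mult_right_mono) (auto simp: power2_eq_square mult_le_cancel_left1)
  have "s^2 * (1 + ln (1/s^2) + c) = s^2 * (1 + c) + s^2 * ln (1/s^2)" by (simp add: algebra_simps)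
  also have "\<dots> \<le> s * (3 + c)" using A B by (simp add: algebra_simps)
  finally have "s^2 * (1 + ln (1/s^2) + c) < \<epsilon>" using s by simp
  moreover have "0 < s^2" "s^2 \<le> 1" using s by (auto simp: power_le_one)
  ultimately show ?thesis by blast
qed

context part_setting begin

lemma sym_eq:
  fixes K :: "'a set \<Rightarrow> 'a set" and \<delta> :: real
  assumes sep: "\<And>A B z w. A \<in> P \<Longrightarrow> B \<in> P \<Longrightarrow> A \<noteq> B \<Longrightarrow> z \<in> K A \<Longrightarrow> w \<in> K B \<Longrightarrow> 2 * \<delta> \<le> dist z w"
    and A: "A \<in> P" "z \<in> K A" "dist z y < \<delta>"
  shows "(SOME A. A \<in> P \<and> (\<exists>z\<in>K A. dist z y < \<delta>)) = A"
proof -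
  have ex: "\<exists>A. A \<in> P \<and> (\<exists>z\<in>K A. dist z y < \<delta>)" using A by blast
  define B where "B = (SOME A. A \<in> P \<and> (\<exists>z\<in>K A. dist z y < \<delta>))"
  have "B \<in> P \<and> (\<exists>z\<in>K B. dist z y < \<delta>)" unfolding B_def using someI_ex[OF ex] .
  then obtain w where w: "B \<in> P" "w \<in> K B" "dist w y < \<delta>" by blast
  show ?thesis
  proof (rule ccontr)
    assume "(SOME A. A \<in> P \<and> (\<exists>z\<in>K A. dist z y < \<delta>)) \<noteq> A"
    then have "A \<noteq> B" unfolding B_def by simp
    then have "2 * \<delta> \<le> dist z w" using sep A w by blast
    moreover have "dist z w \<le> dist z y + dist w y" by (rule dist_triangle2)
    ultimately show False using A w by simp
  qed
qed

lemma setup_K: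
  assumes e: "e > 0" and Pne: "P \<noteq> {}"
  shows "\<exists>K \<delta>. \<delta> > 0 \<and> (\<forall>A\<in>P. closed (K A) \<and> K A \<subseteq> A) \<and>
     (\<forall>A\<in>P. \<forall>B\<in>P. A \<noteq> B \<longrightarrow> (\<forall>z\<in>K A. \<forall>w\<in>K B. 2 * \<delta> \<le> dist z w)) \<and>
     X - (\<Union>A\<in>P. K A) \<in> sets M \<and> measure M (X - (\<Union>A\<in>P. K A)) < e"
proof -
  interpret prob_space M by (rule prob)
  have cP: "card P > 0" using P_fin Pne by (simp add: card_gt_0_iff)
  have "\<forall>A\<in>P. \<exists>F. closed F \<and> F \<subseteq> A \<and> measure M (A - F) < e / card P"
  proof
    fix A assume "A \<in> P"
    then have "A \<in> sets M" using P_sets by auto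
    moreover have "e / card P > 0" using e cP by simp
    ultimately show "\<exists>F. closed F \<and> F \<subseteq> A \<and> measure M (A - F) < e / card P" by (rule closed_inner)
  qed
  from bchoice[OF this] obtain K where K0: "\<forall>A\<in>P. closed (K A) \<and> K A \<subseteq> A \<and> measure M (A - K A) < e / card P"
    by blast
  then have K: "\<And>A. A \<in> P \<Longrightarrow> closed (K A) \<and> K A \<subseteq> A \<and> measure M (A - K A) < e / card P" by blast
  have KX: "K A \<subseteq> X" if "A \<in> P" for A using K[OF that] P_cov that by auto
  have Kc: "compact (K A)" if "A \<in> P" for A
  proof -
    have "compact (X \<inter> K A)" using cpt K[OF that] by (intro compact_Int_closed) auto
    then show ?thesis using KX[OF that] by (simp add: Int_absorb1)
  qed
  have "\<forall>AB\<in>P \<times> P. \<exists>d>0. fst AB \<noteq> snd AB \<longrightarrow> (\<forall>z\<in>K (fst AB). \<forall>w\<in>K (snd AB). d \<le> dist z w)"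
  proof
    fix AB assume AB: "AB \<in> P \<times> P"
    show "\<exists>d>0. fst AB \<noteq> snd AB \<longrightarrow> (\<forall>z\<in>K (fst AB). \<forall>w\<in>K (snd AB). d \<le> dist z w)"
    proof (cases "fst AB = snd AB")
      case True then show ?thesis by (intro exI[of _ 1]) auto
    next
      case False
      have f1: "fst AB \<in> P" and s1: "snd AB \<in> P" using AB by auto
      have "fst AB \<inter> snd AB = {}" using P_dj[OF f1 s1 False] .
      moreover have "K (fst AB) \<subseteq> fst AB" "K (snd AB) \<subseteq> snd AB" using K f1 s1 by auto
      ultimately have "K (fst AB) \<inter> K (snd AB) = {}" by blast
      then have "\<exists>d>0. \<forall>z\<in>K (fst AB). \<forall>w\<in>K (snd AB). d \<le> dist z w"
        by (rule sep_compact[OF Kc[OF f1] Kc[OF s1]])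
      then show ?thesis by blast
    qed
  qed
  from bchoice[OF this] obtain dd where dd0: "\<forall>AB\<in>P \<times> P. dd AB > 0 \<and> (fst AB \<noteq> snd AB \<longrightarrow> (\<forall>z\<in>K (fst AB). \<forall>w\<in>K (snd AB). dd AB \<le> dist z w))"
    by blast
  then have dd: "\<And>AB. AB \<in> P \<times> P \<Longrightarrow> dd AB > 0 \<and> (fst AB \<noteq> snd AB \<longrightarrow> (\<forall>z\<in>K (fst AB). \<forall>w\<in>K (snd AB). dd AB \<le> dist z w))"
    by blast
  define \<delta> where "\<delta> = Min (dd ` (P \<times> P)) / 2"
  have finPP: "finite (P \<times> P)" using P_fin by auto
  have nePP: "P \<times> P \<noteq> {}" using Pne by auto
  have "Min (dd ` (P \<times> P)) > 0" using finPP nePP dd by (subst Min_gr_iff) auto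
  then have dpos: "\<delta> > 0" unfolding \<delta>_def by simp
  have sep: "\<forall>A\<in>P. \<forall>B\<in>P. A \<noteq> B \<longrightarrow> (\<forall>z\<in>K A. \<forall>w\<in>K B. 2 * \<delta> \<le> dist z w)"
  proof (intro ballI impI)
    fix A B z w assume AB: "A \<in> P" "B \<in> P" "A \<noteq> B" and zw: "z \<in> K A" "w \<in> K B"
    have "2 * \<delta> \<le> dd (A, B)" unfolding \<delta>_def using finPP AB by (simp add: Min_le)
    also have "\<dots> \<le> dist z w" using dd[of "(A,B)"] AB zw by auto
    finally show "2 * \<delta> \<le> dist z w" .
  qed
  have Km: "K A \<in> sets M" if "A \<in> P" for A using closed_in K[OF that] KX[OF that] by auto
  have Dm: "X - (\<Union>A\<in>P. K A) \<in> sets M"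
    using Km P_fin spM sets.top by (intro sets.Diff sets.finite_UN) auto
  have "X - (\<Union>A\<in>P. K A) \<subseteq> (\<Union>A\<in>P. A - K A)" using P_cov by auto
  then have "measure M (X - (\<Union>A\<in>P. K A)) \<le> measure M (\<Union>A\<in>P. A - K A)"
    using Km P_sets P_fin by (intro finite_measure_mono sets.finite_UN) auto
  also have "\<dots> \<le> (\<Sum>A\<in>P. measure M (A - K A))"
    using Km P_sets P_fin by (intro finite_measure_subadditive_finite) auto
  also have "\<dots> < (\<Sum>A\<in>P. e / card P)"
    using K P_fin Pne by (intro sum_strict_mono) auto
  also have "\<dots> = e" using cP by simp
  finally show ?thesis using dpos K sep Dm by blast
qed

end


context part_setting begin

lemma est:
  assumes erg: "ergodic_measure f M" and pos: "measure M (stable_set X f p) > 0"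
    and Pne: "P \<noteq> {}" and eps: "\<epsilon> > 0"
  shows "\<exists>T0. \<forall>T\<ge>T0. part_entropy M (iter_join M f P T) / T < \<epsilon>"
proof -
  interpret prob_space M by (rule prob)
  define c where "c = ln (real (card P))"
  have cP: "card P \<ge> 1" using P_fin Pne by (simp add: Suc_le_eq card_gt_0_iff)
  have c0: "c \<ge> 0" unfolding c_def using cP by simp
  obtain \<eta> where eta: "0 < \<eta>" "\<eta> \<le> 1" "\<eta> * (1 + ln (1/\<eta>) + c) < \<epsilon> / 4"
    using eta_choice[of "\<epsilon>/4" c] eps c0 by auto
  define \<epsilon>1 where "\<epsilon>1 = \<epsilon> / (8 * (c + 1))"
  have e1: "\<epsilon>1 > 0" unfolding \<epsilon>1_def using eps c0 by simp
  obtain K \<delta> where d: "\<delta> > 0" and K: "\<forall>A\<in>P. closed (K A) \<and> K A \<subseteq> A"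
    and sep: "\<forall>A\<in>P. \<forall>B\<in>P. A \<noteq> B \<longrightarrow> (\<forall>z\<in>K A. \<forall>w\<in>K B. 2 * \<delta> \<le> dist z w)"
    and Dm: "X - (\<Union>A\<in>P. K A) \<in> sets M" and Dmu: "measure M (X - (\<Union>A\<in>P. K A)) < \<eta> * \<epsilon>1"
    using setup_K[of "\<eta> * \<epsilon>1"] eta e1 Pne by auto
  define D where "D = X - (\<Union>A\<in>P. K A)"
  obtain N where N: "measure M (X - Bn p \<delta> N) < \<epsilon>1" using good_N[OF erg pos d e1] by blast
  define sym where "sym y = (SOME A. A \<in> P \<and> (\<exists>z\<in>K A. dist z y < \<delta>))" for y
  define C0 where "C0 = 2 * ln (real N + 1) + 2 * N * c + 2"
  have C00: "C0 \<ge> 0" unfolding C0_def using c0 by simp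
  define T0 where "T0 = nat \<lceil>4 * C0 / \<epsilon>\<rceil> + 1"
  show ?thesis
  proof (intro exI allI impI)
    fix T assume TT0: "T0 \<le> T"
    then have Tpos: "T > 0" unfolding T0_def by simp
    define Bad where "Bad = {x\<in>X. \<eta> * T < real (card {i\<in>{..<T}. (f ^^ i) x \<in> D})}"
    have DDm: "D \<in> sets M" using Dm unfolding D_def .
    note mc = markov_count[OF DDm eta(1) Tpos]
    have Badm: "Bad \<in> sets M" unfolding Bad_def by (rule mc(2))
    have Badmu: "measure M Bad \<le> measure M D / \<eta>" unfolding Bad_def by (rule mc(1))
    define G where "G = Bn p \<delta> N \<inter> (X - Bad)"
    have Gm: "G \<in> sets M" unfolding G_def using Bn_meas Badm spM sets.top by auto
    have mG: "measure M (X - G) < 2 * \<epsilon>1"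
    proof -
      have "X - G \<subseteq> (X - Bn p \<delta> N) \<union> Bad" unfolding G_def Bad_def by auto
      then have "measure M (X - G) \<le> measure M ((X - Bn p \<delta> N) \<union> Bad)"
        using Bn_meas Badm spM sets.top by (intro finite_measure_mono) auto
      also have "\<dots> \<le> measure M (X - Bn p \<delta> N) + measure M Bad"
        using Bn_meas Badm spM sets.top by (intro measure_subadditive) auto
      also have "measure M Bad < \<epsilon>1"
      proof -
        have "measure M D / \<eta> < \<eta> * \<epsilon>1 / \<eta>" using Dmu eta unfolding D_def by (intro divide_strict_right_mono) auto
        then show ?thesis using Badmu eta by simp
      qed
      finally show ?thesis using N by simp
    qed
    have names: "nm T x \<in> PiE {..<T} (\<lambda>_. P) \<and> (\<exists>k\<le>N. \<exists>m\<le>N. \<exists>B. B \<subseteq> {..<T} \<and> real (card B) \<le> \<eta> * T \<and>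
              (\<forall>i<T. 2 * N \<le> i \<and> i \<notin> B \<longrightarrow> nm T x i = sym ((f ^^ (i - k + m)) p)))" if x: "x \<in> G" for x
    proof -
      have xX: "x \<in> X" using x unfolding G_def by auto
      obtain k m where km: "k \<le> N" "m \<le> N" "x \<in> Ub p \<delta> N k m"
        using x unfolding G_def Bn_def by auto
      define B where "B = {i\<in>{..<T}. (f ^^ i) x \<in> D}"
      have "real (card B) \<le> \<eta> * T" using x unfolding G_def Bad_def B_def by auto
      moreover have "B \<subseteq> {..<T}" unfolding B_def by auto
      moreover have "\<forall>i<T. 2 * N \<le> i \<and> i \<notin> B \<longrightarrow> nm T x i = sym ((f ^^ (i - k + m)) p)"
      proof (intro allI impI)
        fix i assume i: "i < T" "2 * N \<le> i \<and> i \<notin> B"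
        have fiX: "(f ^^ i) x \<in> X" using fn_X[OF xX] .
        then have "(f ^^ i) x \<notin> D" using i unfolding B_def by auto
        then obtain A where A: "A \<in> P" "(f ^^ i) x \<in> K A" using fiX unfolding D_def by auto
        have nmA: "nm T x i = A" unfolding nm_def using i A K name_eq[of A i x] by auto
        define n where "n = i - k"
        have nN: "N \<le> n" and nk: "n + k = i" using i km unfolding n_def by auto
        have "dist ((f ^^ (n + k)) x) ((f ^^ (n + m)) p) < \<delta>" using km(3) nN unfolding Ub_def by auto
        then have "dist ((f ^^ i) x) ((f ^^ (i - k + m)) p) < \<delta>" using nk unfolding n_def by simp
        then have "sym ((f ^^ (i - k + m)) p) = A" unfolding sym_def
          using sym_eq[of K \<delta> A "(f ^^ i) x"] sep A by blast
        then show "nm T x i = sym ((f ^^ (i - k + m)) p)" using nmA by simp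
      qed
      ultimately show ?thesis using nm_in[OF xX] km by blast
    qed
    define Bs where "Bs = {B. B \<subseteq> {..<T} \<and> real (card B) \<le> \<eta> * T}"
    have cnt: "card (nm T ` G) \<le> (N+1) * (N+1) * card Bs * card P ^ (2 * N + nat \<lfloor>\<eta> * T\<rfloor>)"
      unfolding Bs_def
      by (rule count_names[where s="\<lambda>k m i. sym ((f ^^ (i - k + m)) p)", OF P_fin Pne names])
    have Bs1: "card Bs \<ge> 1"
    proof -
      have "finite Bs" unfolding Bs_def by (rule finite_subset[of _ "Pow {..<T}"]) auto
      moreover have "{} \<in> Bs" unfolding Bs_def using eta by auto
      ultimately have "card Bs > 0" by (auto simp: card_gt_0_iff)
      then show ?thesis by simp
    qed
    have lnZ: "ln (card (nm T ` G)) \<le> 2 * ln (real N + 1) + T * \<eta> + \<eta> * T * ln (1/\<eta>) + (2 * N + \<eta> * T) * c"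
    proof -
      have "real (card (nm T ` G)) \<le> ((real N + 1) * (real N + 1)) * real (card Bs) * (real (card P) ^ (2 * N + nat \<lfloor>\<eta> * T\<rfloor>))"
        using cnt by (metis (mono_tags, lifting) of_nat_1 of_nat_add of_nat_le_iff of_nat_mult of_nat_power)
      then have "ln (card (nm T ` G)) \<le> ln ((real N + 1) * (real N + 1)) + ln (real (card Bs)) + ln (real (card P) ^ (2 * N + nat \<lfloor>\<eta> * T\<rfloor>))"
      proof (rule ln_prod_bound)
        have "(1::real) * 1 \<le> (real N + 1) * (real N + 1)" by (intro mult_mono) auto
        then show "1 \<le> (real N + 1) * (real N + 1)" by simp
      qed (use Bs1 cP in \<open>auto simp: one_le_power\<close>)
      also have "ln ((real N + 1) * (real N + 1)) = 2 * ln (real N + 1)" by (simp add: ln_mult)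
      also have "ln (real (card P) ^ (2 * N + nat \<lfloor>\<eta> * T\<rfloor>)) = (2 * N + nat \<lfloor>\<eta> * T\<rfloor>) * c"
        unfolding c_def using cP by (simp add: ln_realpow)
      also have "\<dots> \<le> (2 * N + \<eta> * T) * c"
      proof -
        have "real (nat \<lfloor>\<eta> * T\<rfloor>) \<le> \<eta> * T" using eta by (intro of_nat_floor) simp
        then show ?thesis using c0 by (intro mult_right_mono) auto
      qed
      also have "ln (real (card Bs)) \<le> T * \<eta> + \<eta> * T * ln (1/\<eta>)"
      proof -
        have "real (card Bs) \<le> (1 + \<eta>) ^ T / \<eta> powr (\<eta> * T)" unfolding Bs_def
          using card_small_subsets eta by auto
        then have "ln (real (card Bs)) \<le> ln ((1 + \<eta>) ^ T / \<eta> powr (\<eta> * T))"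
          using Bs1 eta by (subst ln_le_cancel_iff) auto
        also have "\<dots> = T * ln (1 + \<eta>) - \<eta> * T * ln \<eta>"
          using eta by (simp add: ln_div ln_realpow ln_powr)
        also have "\<dots> \<le> T * \<eta> + \<eta> * T * ln (1/\<eta>)"
          using ln_add_one_self_le_self[of \<eta>] eta by (simp add: ln_div mult_left_mono)
        finally show ?thesis .
      qed
      finally show ?thesis by simp
    qed
    have E: "part_entropy M (iter_join M f P T) \<le> ln (card (nm T ` G)) + measure M (X - G) * (T * c) + 2"
      using ent_T[OF Gm] unfolding c_def .
    have "measure M (X - G) * (T * c) \<le> 2 * \<epsilon>1 * (T * c)"
      using mG c0 by (intro mult_right_mono) auto
    with E lnZ have E2: "part_entropy M (iter_join M f P T) \<le>
        C0 + T * (\<eta> * (1 + ln (1/\<eta>) + c)) + T * (2 * \<epsilon>1 * c)"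
      unfolding C0_def by (simp add: algebra_simps)
    have "part_entropy M (iter_join M f P T) / T \<le> C0 / T + \<eta> * (1 + ln (1/\<eta>) + c) + 2 * \<epsilon>1 * c"
      using E2 Tpos by (simp add: field_simps)
    also have "C0 / T \<le> \<epsilon> / 4"
    proof -
      have "4 * C0 / \<epsilon> \<le> T" using TT0 unfolding T0_def by linarith
      then show ?thesis using eps Tpos by (simp add: field_simps)
    qed
    also have "2 * \<epsilon>1 * c \<le> \<epsilon> / 4"
      unfolding \<epsilon>1_def using eps c0 by (simp add: field_simps)
    finally show "part_entropy M (iter_join M f P T) / T < \<epsilon>" using eta eps by linarith
  qed
qed

end


lemma xlnx_nonpos: fixes x :: real assumes "0 \<le> x" "x \<le> 1" shows "x * ln x \<le> 0"
proof (cases "x = 0")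
  case False
  then have "ln x \<le> 0" using assms by simp
  then show ?thesis using assms by (simp add: mult_nonneg_nonpos)
qed simp

lemma part_entropy_nonneg: assumes "prob_space M" shows "part_entropy M R \<ge> 0"
proof -
  interpret prob_space M by (rule assms)
  have "(\<Sum>A\<in>R. measure M A * ln (measure M A)) \<le> 0"
    by (intro sum_nonpos xlnx_nonpos) auto
  then show ?thesis unfolding part_entropy_def by simp
qed

theorem theorem4p4:
  fixes X :: "'a::metric_space set" and f :: "'a \<Rightarrow> 'a" and M :: "'a measure"
  assumes "compact X"
    and "continuous_on X f" and "f ` X \<subseteq> X"
    and "prob_space M"
    and "sets M = sets (restrict_space borel X)" and "space M = X"
    and "ergodic_measure f M"
    and "metric_entropy M f > 0"
    and "p \<in> X"
  shows "stable_set X f p \<in> sets M \<and> emeasure M (stable_set X f p) = 0"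
proof -
  interpret setting X f M
    using assms unfolding setting_def ergodic_measure_def by auto
  interpret prob_space M by (rule assms(4))
  have Wm: "stable_set X f p \<in> sets M" using conv_meas stable_conv by simp
  have "measure M (stable_set X f p) = 0"
  proof (rule ccontr)
    assume "measure M (stable_set X f p) \<noteq> 0"
    then have pos: "measure M (stable_set X f p) > 0" using measure_nonneg[of M] by (simp add: less_le)
    have "0 < (SUP P \<in> {P. finite_meas_partition M P}. ereal (entropy_part M f P))"
      using assms(8) unfolding metric_entropy_def .
    then obtain P where P: "finite_meas_partition M P" and hP: "0 < ereal (entropy_part M f P)"
      unfolding less_SUP_iff by blast
    interpret part_setting X f M P
      using P by (unfold_locales) auto
    have Pne: "P \<noteq> {}" using P_cov assms(9) by auto
    define a where "a n = part_entropy M (iter_join M f P n) / real n" for n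
    have "a \<longlonglongrightarrow> 0"
      unfolding LIMSEQ_iff
    proof (intro allI impI)
      fix r :: real assume r: "r > 0"
      obtain T0 where T0: "\<forall>T\<ge>T0. part_entropy M (iter_join M f P T) / T < r"
        using est[OF assms(7) pos Pne r] by blast
      have "\<forall>n\<ge>T0. norm (a n - 0) < r"
      proof (intro allI impI)
        fix n assume "T0 \<le> n"
        then have "a n < r" using T0 unfolding a_def by blast
        moreover have "a n \<ge> 0" unfolding a_def using part_entropy_nonneg[OF assms(4)] by simp
        ultimately show "norm (a n - 0) < r" by simp
      qed
      then show "\<exists>no. \<forall>n\<ge>no. norm (a n - 0) < r" by blast
    qed
    then have "entropy_part M f P = 0" unfolding entropy_part_def a_def[symmetric] by (rule limI)
    then show False using hP by simp
  qed
  then show ?thesis using Wm emeasure_eq_measure by simp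
qed


end
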